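(* Let $(F,+,\cdot)$ be a (left) near-field such that the set $\{+_\sigma:\sigma\text{ a multiplicative automorphism of }F\}$ (equivalently, the set of near-fields $(F,+_\sigma,\cdot)$ induced by multiplicative automorphisms) is finite, and such that $F$ is finite dimensional as a right vector space over its division ring $F_{d}$ of right distributive elements. Let $\{V_k\}_{k\in I}$ be a family of multiplicative near-vector spaces over $F$. Then the direct product $\prod_{k\in I}V_k$, with componentwise addition and scalar multiplication, is a near-vector space over $F$.
   Context: A (left) near-field is $(F,+,\cdot,0,1)$ where $(F,\cdot,1)$ is a monoid, $(F\setminus\{0\},\cdot)$ is a group, $(F,+,0)$ is an abelian group, and $\alpha(\beta+\gamma)=\alpha\beta+\alpha\gamma$. $F_{d}$ is the set of $\gamma$ with $(\alpha+\beta)\gamma=\alpha\gamma+\beta\gamma$ for all $\alpha,\beta$; it is a division ring and $F$ is a right vector space over it. A multiplicative automorphism is a monoid automorphism of $(F,\cdot)$; for such $\tau$, $\alpha+_\tau\beta=\tau^{-1}(\tau(\alpha)+\tau(\beta))$. A near-vector space over $F$ is an abelian group $V$ with a left action of $(F,\cdot)$ by group endomorphisms, with $0,1,-1$ acting as $0,\mathrm{id},-\mathrm{id}$, the action free, and the quasi-kernel $Q(V)=\{u:\forall\alpha,\beta\ \exists\gamma,\ \alpha u+\beta u=\gamma u\}$ generating $V$ additively. For families $\boldsymbol\sigma=(\sigma_i)_{i\in J}$, $\boldsymbol\rho=(\rho_i)_{i\in J}$ of multiplicative automorphisms, $F^{\boldsymbol\sigma,\boldsymbol\rho}$ is the set of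 finitely supported $(\alpha_i)\in F^J$ with addition $(\alpha_i+_{\sigma_i}\beta_i)$ and scalar multiplication $\alpha\cdot(\alpha_i)=(\rho_i(\alpha)\alpha_i)$. A near-vector space $V$ over $F$ is multiplicative if there is a bijective additive map $\phi:V\to F^{\boldsymbol\sigma,\boldsymbol\rho}$ with $\phi(\alpha v)=\alpha\phi(v)$, for some such families. *)

theory Defs
  imports Main "HOL-Library.FuncSet"
begin

definition near_field :: "('a \<Rightarrow> 'a \<Rightarrow> 'a) \<Rightarrow> ('a \<Rightarrow> 'a \<Rightarrow> 'a) \<Rightarrow> 'a \<Rightarrow> 'a \<Rightarrow> bool" where
  "near_field add mult z u \<longleftrightarrow>
     \<comment> \<open>(F, mult, u) is a monoid\<close>
     (\<forall>a b c. mult (mult a b) c = mult a (mult b c)) \<and>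
     (\<forall>a. mult u a = a \<and> mult a u = a) \<and>
     \<comment> \<open>(F - {0}, mult) is a group\<close>
     u \<noteq> z \<and>
     (\<forall>a b. a \<noteq> z \<longrightarrow> b \<noteq> z \<longrightarrow> mult a b \<noteq> z) \<and>
     (\<forall>a. a \<noteq> z \<longrightarrow> (\<exists>b. b \<noteq> z \<and> mult a b = u \<and> mult b a = u)) \<and>
     \<comment> \<open>(F, add, z) is an abelian group\<close>
     (\<forall>a b c. add (add a b) c = add a (add b c)) \<and>
     (\<forall>a b. add a b = add b a) \<and>
     (\<forall>a. add z a = a) \<and>
     (\<forall>a. \<exists>b. add a b = z) \<and>
     \<comment> \<open>left distributivity\<close>
     (\<forall>a b c. mult a (add b c) = add (mult a b) (mult a c))"

definition nf_neg :: "('a \<Rightarrow> 'a \<Rightarrow> 'a) \<Rightarrow> 'a \<Rightarrow> 'a \<Rightarrow> 'a" where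
  "nf_neg add z a = (THE b. add a b = z)"

definition dist_elems :: "('a \<Rightarrow> 'a \<Rightarrow> 'a) \<Rightarrow> ('a \<Rightarrow> 'a \<Rightarrow> 'a) \<Rightarrow> 'a set" where
  "dist_elems add mult = {g. \<forall>a b. mult (add a b) g = add (mult a g) (mult b g)}"

inductive_set rspan :: "('a \<Rightarrow> 'a \<Rightarrow> 'a) \<Rightarrow> ('a \<Rightarrow> 'a \<Rightarrow> 'a) \<Rightarrow> 'a \<Rightarrow> 'a set \<Rightarrow> 'a set \<Rightarrow> 'a set"
  for add mult z B D where
  rspan_zero: "z \<in> rspan add mult z B D"
| rspan_step: "x \<in> rspan add mult z B D \<Longrightarrow> b \<in> B \<Longrightarrow> d \<in> D \<Longrightarrow>
                 add x (mult b d) \<in> rspan add mult z B D"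

definition fin_dim_over_Fd :: "('a \<Rightarrow> 'a \<Rightarrow> 'a) \<Rightarrow> ('a \<Rightarrow> 'a \<Rightarrow> 'a) \<Rightarrow> 'a \<Rightarrow> bool" where
  "fin_dim_over_Fd add mult z \<longleftrightarrow>
     (\<exists>B. finite B \<and> rspan add mult z B (dist_elems add mult) = UNIV)"

definition mult_aut :: "('a \<Rightarrow> 'a \<Rightarrow> 'a) \<Rightarrow> 'a \<Rightarrow> ('a \<Rightarrow> 'a) \<Rightarrow> bool" where
  "mult_aut mult u \<tau> \<longleftrightarrow> bij \<tau> \<and> (\<forall>a b. \<tau> (mult a b) = mult (\<tau> a) (\<tau> b)) \<and> \<tau> u = u"

definition tau_add :: "('a \<Rightarrow> 'a \<Rightarrow> 'a) \<Rightarrow> ('a \<Rightarrow> 'a) \<Rightarrow> 'a \<Rightarrow> 'a \<Rightarrow> 'a" where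
  "tau_add add \<tau> = (\<lambda>a b. inv \<tau> (add (\<tau> a) (\<tau> b)))"

definition ab_grp_on :: "'v set \<Rightarrow> ('v \<Rightarrow> 'v \<Rightarrow> 'v) \<Rightarrow> 'v \<Rightarrow> bool" where
  "ab_grp_on V vadd vz \<longleftrightarrow>
     vz \<in> V \<and> (\<forall>x\<in>V. \<forall>y\<in>V. vadd x y \<in> V) \<and>
     (\<forall>x\<in>V. \<forall>y\<in>V. \<forall>w\<in>V. vadd (vadd x y) w = vadd x (vadd y w)) \<and>
     (\<forall>x\<in>V. \<forall>y\<in>V. vadd x y = vadd y x) \<and>
     (\<forall>x\<in>V. vadd vz x = x) \<and>
     (\<forall>x\<in>V. \<exists>y\<in>V. vadd x y = vz)"

definition qker :: "'v set \<Rightarrow> ('v \<Rightarrow> 'v \<Rightarrow> 'v) \<Rightarrow> ('a \<Rightarrow> 'v \<Rightarrow> 'v) \<Rightarrow> 'v set" where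
  "qker V vadd smult = {v \<in> V. \<forall>a b. \<exists>c. vadd (smult a v) (smult b v) = smult c v}"

inductive_set agen :: "'v set \<Rightarrow> ('v \<Rightarrow> 'v \<Rightarrow> 'v) \<Rightarrow> 'v \<Rightarrow> 'v set \<Rightarrow> 'v set"
  for V vadd vz Q where
  agen_zero: "vz \<in> agen V vadd vz Q"
| agen_gen: "q \<in> Q \<Longrightarrow> q \<in> agen V vadd vz Q"
| agen_add: "x \<in> agen V vadd vz Q \<Longrightarrow> y \<in> agen V vadd vz Q \<Longrightarrow> vadd x y \<in> agen V vadd vz Q"
| agen_neg: "x \<in> agen V vadd vz Q \<Longrightarrow> y \<in> V \<Longrightarrow> vadd x y = vz \<Longrightarrow> y \<in> agen V vadd vz Q"

definition nvs :: "('a \<Rightarrow> 'a \<Rightarrow> 'a) \<Rightarrow> ('a \<Rightarrow> 'a \<Rightarrow> 'a) \<Rightarrow> 'a \<Rightarrow> 'a \<Rightarrow>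
                   'v set \<Rightarrow> ('v \<Rightarrow> 'v \<Rightarrow> 'v) \<Rightarrow> 'v \<Rightarrow> ('a \<Rightarrow> 'v \<Rightarrow> 'v) \<Rightarrow> bool" where
  "nvs add mult z u V vadd vz smult \<longleftrightarrow>
     ab_grp_on V vadd vz \<and>
     (\<forall>a. \<forall>v\<in>V. smult a v \<in> V) \<and>
     (\<forall>a. \<forall>v\<in>V. \<forall>w\<in>V. smult a (vadd v w) = vadd (smult a v) (smult a w)) \<and>
     (\<forall>a b. \<forall>v\<in>V. smult (mult a b) v = smult a (smult b v)) \<and>
     (\<forall>v\<in>V. smult z v = vz) \<and>
     (\<forall>v\<in>V. smult u v = v) \<and>
     (\<forall>v\<in>V. vadd v (smult (nf_neg add z u) v) = vz) \<and>
     (\<forall>a b. \<forall>v\<in>V. smult a v = smult b v \<longrightarrow> a = b \<or> v = vz) \<and>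
     V = agen V vadd vz (qker V vadd smult)"

definition fsupp :: "'a \<Rightarrow> 'j set \<Rightarrow> ('j \<Rightarrow> 'a) set" where
  "fsupp z J = {f. (\<forall>i. i \<notin> J \<longrightarrow> f i = z) \<and> finite {i. f i \<noteq> z}}"

text \<open>Multiplicative near-vector space: isomorphic to some F^(sigma,rho).
  The index set J is taken inside the carrier type 'v (no loss: J injects into V).\<close>
definition mult_nvs :: "('a \<Rightarrow> 'a \<Rightarrow> 'a) \<Rightarrow> ('a \<Rightarrow> 'a \<Rightarrow> 'a) \<Rightarrow> 'a \<Rightarrow> 'a \<Rightarrow>
                   'v set \<Rightarrow> ('v \<Rightarrow> 'v \<Rightarrow> 'v) \<Rightarrow> 'v \<Rightarrow> ('a \<Rightarrow> 'v \<Rightarrow> 'v) \<Rightarrow> bool" where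
  "mult_nvs add mult z u V vadd vz smult \<longleftrightarrow>
     nvs add mult z u V vadd vz smult \<and>
     (\<exists>(J :: 'v set) (\<sigma> :: 'v \<Rightarrow> 'a \<Rightarrow> 'a) (\<rho> :: 'v \<Rightarrow> 'a \<Rightarrow> 'a) (\<phi> :: 'v \<Rightarrow> 'v \<Rightarrow> 'a).
        (\<forall>i\<in>J. mult_aut mult u (\<sigma> i) \<and> mult_aut mult u (\<rho> i)) \<and>
        bij_betw \<phi> V (fsupp z J) \<and>
        (\<forall>v\<in>V. \<forall>w\<in>V. \<phi> (vadd v w) =
             (\<lambda>i. if i \<in> J then tau_add add (\<sigma> i) (\<phi> v i) (\<phi> w i) else z)) \<and>
        (\<forall>a. \<forall>v\<in>V. \<phi> (smult a v) =
             (\<lambda>i. if i \<in> J then mult (\<rho> i a) (\<phi> v i) else z)))"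

end

theory Submission
  imports Defs
begin


definition ninv :: "('a \<Rightarrow> 'a \<Rightarrow> 'a) \<Rightarrow> 'a \<Rightarrow> 'a \<Rightarrow> 'a" where
  "ninv mult u a = (SOME b. mult a b = u \<and> mult b a = u)"

definition kap :: "('a \<Rightarrow> 'a \<Rightarrow> 'a) \<Rightarrow> 'a \<Rightarrow> ('a \<Rightarrow> 'a) \<Rightarrow> ('a \<Rightarrow> 'a) \<Rightarrow> 'a \<Rightarrow> 'a \<Rightarrow> 'a" where
  "kap mult u \<sigma> \<rho> \<alpha> = (\<lambda>x. mult (mult (ninv mult u (\<sigma> \<alpha>)) (\<sigma> (\<rho> x))) (\<sigma> \<alpha>))"

definition cls where
  "cls add mult u \<sigma> \<rho> \<alpha> = tau_add add (kap mult u \<sigma> \<rho> \<alpha>)"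

locale nf =
  fixes add mult :: "'a \<Rightarrow> 'a \<Rightarrow> 'a" and z u :: 'a
  assumes NF: "near_field add mult z u"
begin

lemma massoc: "mult (mult a b) c = mult a (mult b c)"
  and munit: "mult u a = a" "mult a u = a"
  and uz: "u \<noteq> z"
  and mnz: "a \<noteq> z \<Longrightarrow> b \<noteq> z \<Longrightarrow> mult a b \<noteq> z"
  and minv: "a \<noteq> z \<Longrightarrow> \<exists>b. b \<noteq> z \<and> mult a b = u \<and> mult b a = u"
  and aassoc: "add (add a b) c = add a (add b c)"
  and acomm: "add a b = add b a"
  and azl: "add z a = a"
  and aneg: "\<exists>b. add a b = z"
  and ldist: "mult a (add b c) = add (mult a b) (mult a c)"
  using NF unfolding near_field_def by metis+

lemma azr: "add a z = a" using azl acomm by metis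

lemma acancel: assumes "add a b = add a c" shows "b = c"
proof -
  obtain n where n: "add a n = z" using aneg by blast
  have "add n (add a b) = add n (add a c)" using assms by simp
  then show ?thesis by (metis aassoc acomm n azl)
qed

lemma mzr: "mult a z = z"
proof -
  have "mult a z = add (mult a z) (mult a z)" using ldist[of a z z] azl by simp
  then have "add (mult a z) z = add (mult a z) (mult a z)" using azr by simp
  then show ?thesis using acancel by metis
qed

lemma mzl: "mult z a = z"
proof (cases "a = z")
  case True then show ?thesis using mzr by simp
next
  case False
  then obtain b where b: "b \<noteq> z" "mult a b = u" using minv by blast
  show ?thesis
  proof (rule ccontr)
    assume "mult z a \<noteq> z"
    then have "mult (mult z a) b \<noteq> z" using mnz b by blast
    then show False using b massoc munit mzr by metis
  qed
qed

lemma ninv: assumes "a \<noteq> z"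
  shows "mult a (ninv mult u a) = u" "mult (ninv mult u a) a = u" "ninv mult u a \<noteq> z"
proof -
  have ex: "\<exists>b. mult a b = u \<and> mult b a = u" using minv[OF assms] by blast
  have h: "mult a (ninv mult u a) = u \<and> mult (ninv mult u a) a = u"
    unfolding ninv_def by (rule someI_ex[OF ex])
  then show "mult a (ninv mult u a) = u" "mult (ninv mult u a) a = u" by auto
  show "ninv mult u a \<noteq> z" using h mzr uz by metis
qed

lemma aut_z: assumes "mult_aut mult u \<tau>" shows "\<tau> z = z"
proof -
  have b: "bij \<tau>" and h: "\<And>a b. \<tau> (mult a b) = mult (\<tau> a) (\<tau> b)"
    using assms unfolding mult_aut_def by auto
  obtain x where x: "\<tau> x = z" using b by (metis bij_def surj_def)
  have "\<tau> z = \<tau> (mult z x)" using mzl by simp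
  also have "\<dots> = mult (\<tau> z) z" using h x by simp
  finally show ?thesis using mzr by simp
qed

lemma aut_inv: assumes "mult_aut mult u \<tau>" shows "\<tau> (inv \<tau> y) = y" "inv \<tau> (\<tau> x) = x"
  using assms unfolding mult_aut_def by (auto simp: bij_def surj_f_inv_f inv_f_f)

lemma aut_nz: assumes "mult_aut mult u \<tau>" "a \<noteq> z" shows "\<tau> a \<noteq> z"
  using assms aut_z aut_inv by metis

lemma tau_zl: assumes "mult_aut mult u \<tau>" shows "tau_add add \<tau> z x = x"
  using assms aut_z aut_inv azl unfolding tau_add_def by metis

lemma tau_zr: assumes "mult_aut mult u \<tau>" shows "tau_add add \<tau> x z = x"
  using assms aut_z aut_inv azr unfolding tau_add_def by metis

lemma kap_aut:
  assumes s: "mult_aut mult u \<sigma>" and r: "mult_aut mult u \<rho>" and a: "\<alpha> \<noteq> z"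
  shows "mult_aut mult u (kap mult u \<sigma> \<rho> \<alpha>)"
proof -
  define b where "b = \<sigma> \<alpha>"
  define b' where "b' = ninv mult u b"
  have bz: "b \<noteq> z" using aut_nz[OF s a] b_def by simp
  have bb: "mult b b' = u" "mult b' b = u" using ninv[OF bz] b_def b'_def by auto
  have bb2: "mult b' (mult b x) = x" "mult b (mult b' x) = x" for x
    using bb massoc munit by metis+
  define c where "c = (\<lambda>x. mult (mult b' x) b)"
  define d where "d = (\<lambda>x. mult (mult b x) b')"
  have "c \<circ> d = id" unfolding c_def d_def by (auto simp: fun_eq_iff massoc bb bb2 munit)
  moreover have "d \<circ> c = id" unfolding c_def d_def by (auto simp: fun_eq_iff massoc bb bb2 munit)
  ultimately have bc: "bij c" using o_bij by blast
  have k: "kap mult u \<sigma> \<rho> \<alpha> = c \<circ> (\<sigma> \<circ> \<rho>)"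
    unfolding kap_def c_def b'_def b_def by (simp add: fun_eq_iff)
  have "bij (c \<circ> (\<sigma> \<circ> \<rho>))" using bc s r unfolding mult_aut_def by (blast intro: bij_comp)
  moreover have "\<forall>x y. (c \<circ> (\<sigma> \<circ> \<rho>)) (mult x y) = mult ((c \<circ> (\<sigma> \<circ> \<rho>)) x) ((c \<circ> (\<sigma> \<circ> \<rho>)) y)"
  proof (intro allI)
    fix x y
    have "\<sigma> (\<rho> (mult x y)) = mult (\<sigma> (\<rho> x)) (\<sigma> (\<rho> y))" using s r unfolding mult_aut_def by simp
    then show "(c \<circ> (\<sigma> \<circ> \<rho>)) (mult x y) = mult ((c \<circ> (\<sigma> \<circ> \<rho>)) x) ((c \<circ> (\<sigma> \<circ> \<rho>)) y)"
      unfolding c_def by (simp add: massoc bb munit flip: massoc[of b b'])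
  qed
  moreover have "(c \<circ> (\<sigma> \<circ> \<rho>)) u = u" using s r bb unfolding mult_aut_def c_def
    by (simp add: munit)
  ultimately show ?thesis using k unfolding mult_aut_def by simp
qed

lemma key:
  assumes s: "mult_aut mult u \<sigma>" and r: "mult_aut mult u \<rho>" and a: "\<alpha> \<noteq> z"
  shows "tau_add add \<sigma> (mult (\<rho> x) \<alpha>) (mult (\<rho> y) \<alpha>)
         = mult (\<rho> (cls add mult u \<sigma> \<rho> \<alpha> x y)) \<alpha>"
proof -
  define b where "b = \<sigma> \<alpha>"
  define b' where "b' = ninv mult u b"
  define k where "k = kap mult u \<sigma> \<rho> \<alpha>"
  have bz: "b \<noteq> z" using aut_nz[OF s a] b_def by simp
  have bb: "mult b b' = u" "mult b' b = u" using ninv[OF bz] b_def b'_def by auto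
  have ka: "mult_aut mult u k" using kap_aut[OF s r a] k_def by simp
  have kx: "k x = mult (mult b' (\<sigma> (\<rho> x))) b" for x
    unfolding k_def kap_def b'_def b_def by simp
  have sm: "\<sigma> (mult (\<rho> x) \<alpha>) = mult b (k x)" for x
  proof -
    have "\<sigma> (mult (\<rho> x) \<alpha>) = mult (\<sigma> (\<rho> x)) b" using s unfolding mult_aut_def b_def by simp
    also have "\<dots> = mult (mult b b') (mult (\<sigma> (\<rho> x)) b)" using bb munit by simp
    also have "\<dots> = mult b (k x)" using kx massoc by simp
    finally show ?thesis .
  qed
  define c where "c = cls add mult u \<sigma> \<rho> \<alpha> x y"
  have c: "k c = add (k x) (k y)"
    unfolding c_def cls_def tau_add_def k_def[symmetric] using aut_inv[OF ka] by simp
  have "tau_add add \<sigma> (mult (\<rho> x) \<alpha>) (mult (\<rho> y) \<alpha>) = inv \<sigma> (add (mult b (k x)) (mult b (k y)))"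
    unfolding tau_add_def sm by simp
  also have "\<dots> = inv \<sigma> (mult b (k c))" using c ldist by simp
  also have "\<dots> = inv \<sigma> (\<sigma> (mult (\<rho> c) \<alpha>))" using sm by simp
  also have "\<dots> = mult (\<rho> c) \<alpha>" using aut_inv[OF s] by simp
  finally show ?thesis unfolding c_def .
qed

lemma cls_in:
  assumes s: "mult_aut mult u \<sigma>" and r: "mult_aut mult u \<rho>" and a: "\<alpha> \<noteq> z"
  shows "cls add mult u \<sigma> \<rho> \<alpha> \<in> {tau_add add \<tau> | \<tau>. mult_aut mult u \<tau>}"
  unfolding cls_def using kap_aut[OF assms] by blast

end


definition pf where
  "pf add mult u z J \<sigma> \<rho> \<phi> T v = (\<lambda>i. if i \<in> J \<and> \<phi> v i \<noteq> z \<and> cls add mult u (\<sigma> i) (\<rho> i) (\<phi> v i) \<in> T then \<phi> v i else z)"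

definition proj where
  "proj add mult u z V J \<sigma> \<rho> \<phi> T v = inv_into V \<phi> (pf add mult u z J \<sigma> \<rho> \<phi> T v)"

locale mnv = nf +
  fixes V :: "'v set" and vadd :: "'v \<Rightarrow> 'v \<Rightarrow> 'v" and vz :: 'v and smult :: "'a \<Rightarrow> 'v \<Rightarrow> 'v"
    and J :: "'v set" and \<sigma> \<rho> :: "'v \<Rightarrow> 'a \<Rightarrow> 'a" and \<phi> :: "'v \<Rightarrow> 'v \<Rightarrow> 'a"
  assumes NVS: "nvs add mult z u V vadd vz smult"
    and auts: "\<forall>i\<in>J. mult_aut mult u (\<sigma> i) \<and> mult_aut mult u (\<rho> i)"
    and bij: "bij_betw \<phi> V (fsupp z J)"
    and hadd: "\<forall>v\<in>V. \<forall>w\<in>V. \<phi> (vadd v w) =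
             (\<lambda>i. if i \<in> J then tau_add add (\<sigma> i) (\<phi> v i) (\<phi> w i) else z)"
    and hsm: "\<forall>a. \<forall>v\<in>V. \<phi> (smult a v) =
             (\<lambda>i. if i \<in> J then mult (\<rho> i a) (\<phi> v i) else z)"
begin

lemma vz_in: "vz \<in> V" using NVS unfolding nvs_def ab_grp_on_def by blast
lemma vadd_in: "v \<in> V \<Longrightarrow> w \<in> V \<Longrightarrow> vadd v w \<in> V"
proof -
  have "ab_grp_on V vadd vz" using NVS unfolding nvs_def by blast
  then show "v \<in> V \<Longrightarrow> w \<in> V \<Longrightarrow> vadd v w \<in> V" unfolding ab_grp_on_def by blast
qed
lemma smult_in: "v \<in> V \<Longrightarrow> smult a v \<in> V" using NVS unfolding nvs_def by blast
lemma smult_z: "v \<in> V \<Longrightarrow> smult z v = vz" using NVS unfolding nvs_def by blast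

lemma phi_in: "v \<in> V \<Longrightarrow> \<phi> v \<in> fsupp z J" using bij by (meson bij_betw_apply)
lemma phi_inj: "v \<in> V \<Longrightarrow> w \<in> V \<Longrightarrow> \<phi> v = \<phi> w \<Longrightarrow> v = w"
  using bij unfolding bij_betw_def inj_on_def by blast
lemma phi_inv: assumes "x \<in> fsupp z J" shows "inv_into V \<phi> x \<in> V" "\<phi> (inv_into V \<phi> x) = x"
  using assms bij bij_betw_inv_into_right bij_betw_inv_into bij_betw_apply by metis+

lemma phi_vz: "\<phi> vz = (\<lambda>i. z)"
proof -
  have "\<phi> vz = \<phi> (smult z vz)" using smult_z vz_in by simp
  also have "\<dots> = (\<lambda>i. z)"
  proof -
    have "\<forall>x\<in>J. \<rho> x z = z" using auts aut_z by blast
    then show ?thesis using hsm vz_in mzl by (auto simp: fun_eq_iff)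
  qed
  finally show ?thesis .
qed

lemma pf_in: assumes "v \<in> V" shows "pf add mult u z J \<sigma> \<rho> \<phi> T v \<in> fsupp z J"
proof -
  have "finite {i. \<phi> v i \<noteq> z}" using phi_in[OF assms] unfolding fsupp_def by blast
  then have "finite {i. pf add mult u z J \<sigma> \<rho> \<phi> T v i \<noteq> z}"
    by (rule rev_finite_subset) (auto simp: pf_def)
  then show ?thesis unfolding fsupp_def pf_def by auto
qed

lemma proj_in: "v \<in> V \<Longrightarrow> proj add mult u z V J \<sigma> \<rho> \<phi> T v \<in> V"
  unfolding proj_def using pf_in phi_inv by blast

lemma phi_proj: "v \<in> V \<Longrightarrow> \<phi> (proj add mult u z V J \<sigma> \<rho> \<phi> T v) = pf add mult u z J \<sigma> \<rho> \<phi> T v"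
  unfolding proj_def using pf_in phi_inv by blast

lemma proj_empty: assumes "v \<in> V" shows "proj add mult u z V J \<sigma> \<rho> \<phi> {} v = vz"
  using phi_inj[OF proj_in[OF assms] vz_in] phi_proj[OF assms] phi_vz by (simp add: pf_def)

lemma proj_insert: assumes v: "v \<in> V" and p: "p \<notin> T"
  shows "proj add mult u z V J \<sigma> \<rho> \<phi> (insert p T) v =
     vadd (proj add mult u z V J \<sigma> \<rho> \<phi> T v) (proj add mult u z V J \<sigma> \<rho> \<phi> {p} v)"
proof (rule phi_inj[OF proj_in[OF v] vadd_in[OF proj_in[OF v] proj_in[OF v]]])
  show "\<phi> (proj add mult u z V J \<sigma> \<rho> \<phi> (insert p T) v) =
    \<phi> (vadd (proj add mult u z V J \<sigma> \<rho> \<phi> T v) (proj add mult u z V J \<sigma> \<rho> \<phi> {p} v))"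
  proof
    fix i
    let ?c = "cls add mult u (\<sigma> i) (\<rho> i) (\<phi> v i)"
    have "(if i \<in> J \<and> \<phi> v i \<noteq> z \<and> ?c \<in> insert p T then \<phi> v i else z) =
       (if i \<in> J then tau_add add (\<sigma> i)
         (if i \<in> J \<and> \<phi> v i \<noteq> z \<and> ?c \<in> T then \<phi> v i else z)
         (if i \<in> J \<and> \<phi> v i \<noteq> z \<and> ?c \<in> {p} then \<phi> v i else z) else z)"
    proof (cases "i \<in> J")
      case True
      then have a: "mult_aut mult u (\<sigma> i)" using auts by blast
      show ?thesis
      proof (cases "?c \<in> T")
        case True then have "?c \<notin> {p}" using p by blast
        then show ?thesis using True tau_zr[OF a] tau_zl[OF a] \<open>i \<in> J\<close> by simp
      next
        case False then show ?thesis using tau_zr[OF a] tau_zl[OF a] \<open>i \<in> J\<close> by simp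
      qed
    qed simp
    then show "\<phi> (proj add mult u z V J \<sigma> \<rho> \<phi> (insert p T) v) i =
    \<phi> (vadd (proj add mult u z V J \<sigma> \<rho> \<phi> T v) (proj add mult u z V J \<sigma> \<rho> \<phi> {p} v)) i"
      using hadd proj_in[OF v] phi_proj[OF v] unfolding pf_def by simp
  qed
qed

lemma proj_all: assumes v: "v \<in> V"
  and S: "\<forall>i\<in>J. \<forall>\<alpha>. \<alpha> \<noteq> z \<longrightarrow> cls add mult u (\<sigma> i) (\<rho> i) \<alpha> \<in> S"
  shows "proj add mult u z V J \<sigma> \<rho> \<phi> S v = v"
proof (rule phi_inj[OF proj_in[OF v] v])
  show "\<phi> (proj add mult u z V J \<sigma> \<rho> \<phi> S v) = \<phi> v"
  proof
    fix i
    have "\<phi> v i = z" if "\<not> (i \<in> J \<and> \<phi> v i \<noteq> z \<and> cls add mult u (\<sigma> i) (\<rho> i) (\<phi> v i) \<in> S)"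
      using that phi_in[OF v] S unfolding fsupp_def by auto
    then show "\<phi> (proj add mult u z V J \<sigma> \<rho> \<phi> S v) i = \<phi> v i"
      using phi_proj[OF v] unfolding pf_def by auto
  qed
qed

lemma proj_q: fixes p :: "'a \<Rightarrow> 'a \<Rightarrow> 'a" assumes v: "v \<in> V"
  defines "w \<equiv> proj add mult u z V J \<sigma> \<rho> \<phi> {p} v"
  shows "vadd (smult a w) (smult b w) = smult (p a b) w"
proof -
  have w: "w \<in> V" unfolding w_def using proj_in[OF v] .
  have pw: "\<phi> w = pf add mult u z J \<sigma> \<rho> \<phi> {p} v" unfolding w_def using phi_proj[OF v] .
  show ?thesis
  proof (rule phi_inj[OF vadd_in[OF smult_in[OF w] smult_in[OF w]] smult_in[OF w]])
    show "\<phi> (vadd (smult a w) (smult b w)) = \<phi> (smult (p a b) w)"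
      using hadd hsm smult_in[OF w] w
      apply (simp add: fun_eq_iff)
      using pw auts tau_zl mzr key by (auto simp: pf_def)
  qed
qed

end

lemma nvsD:
  assumes "nvs add mult z u V vadd vz smult"
  shows "ab_grp_on V vadd vz"
    "\<And>a v. v\<in>V \<Longrightarrow> smult a v \<in> V"
    "\<And>a v w. v\<in>V \<Longrightarrow> w\<in>V \<Longrightarrow> smult a (vadd v w) = vadd (smult a v) (smult a w)"
    "\<And>a b v. v\<in>V \<Longrightarrow> smult (mult a b) v = smult a (smult b v)"
    "\<And>v. v\<in>V \<Longrightarrow> smult z v = vz"
    "\<And>v. v\<in>V \<Longrightarrow> smult u v = v"
    "\<And>v. v\<in>V \<Longrightarrow> vadd v (smult (nf_neg add z u) v) = vz"
    "\<And>a b v. v\<in>V \<Longrightarrow> smult a v = smult b v \<Longrightarrow> a = b \<or> v = vz"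
  using assms unfolding nvs_def by (elim conjE; blast)+

lemma agD:
  assumes "ab_grp_on V vadd vz"
  shows "vz \<in> V" "\<And>x y. x\<in>V \<Longrightarrow> y\<in>V \<Longrightarrow> vadd x y \<in> V"
    "\<And>x y w. x\<in>V \<Longrightarrow> y\<in>V \<Longrightarrow> w\<in>V \<Longrightarrow> vadd (vadd x y) w = vadd x (vadd y w)"
    "\<And>x y. x\<in>V \<Longrightarrow> y\<in>V \<Longrightarrow> vadd x y = vadd y x"
    "\<And>x. x\<in>V \<Longrightarrow> vadd vz x = x"
  using assms unfolding ab_grp_on_def by (elim conjE; blast)+


theorem theorem3p17:
  fixes add mult :: "'a \<Rightarrow> 'a \<Rightarrow> 'a" and z u :: 'a
    and I :: "'i set" and V :: "'i \<Rightarrow> 'v set"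
    and vadd :: "'i \<Rightarrow> 'v \<Rightarrow> 'v \<Rightarrow> 'v" and vz :: "'i \<Rightarrow> 'v"
    and smult :: "'i \<Rightarrow> 'a \<Rightarrow> 'v \<Rightarrow> 'v"
  assumes "near_field add mult z u"
    and "finite {tau_add add \<tau> | \<tau>. mult_aut mult u \<tau>}"
    and "fin_dim_over_Fd add mult z"
    and "\<forall>k\<in>I. mult_nvs add mult z u (V k) (vadd k) (vz k) (smult k)"
  shows "nvs add mult z u (Pi\<^sub>E I V)
           (\<lambda>f g. \<lambda>k\<in>I. vadd k (f k) (g k))
           (\<lambda>k\<in>I. vz k)
           (\<lambda>a f. \<lambda>k\<in>I. smult k a (f k))"
proof -
  interpret nf add mult z u using assms(1) by (unfold_locales)
  define P where "P = Pi\<^sub>E I V"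
  define pa where "pa = (\<lambda>f g. \<lambda>k\<in>I. vadd k (f k) (g k))"
  define pz where "pz = (\<lambda>k\<in>I. vz k)"
  define ps where "ps = (\<lambda>a f. \<lambda>k\<in>I. smult k a (f k))"
  define S where "S = {tau_add add \<tau> | \<tau>. mult_aut mult u \<tau>}"
  have Sfin: "finite S" using assms(2) S_def by simp
  define Mp where "Mp = (\<lambda>k x. mnv add mult z u (V k) (vadd k) (vz k) (smult k)
                 (fst x) (fst (snd x)) (fst (snd (snd x))) (snd (snd (snd x))))"
  define X where "X = (\<lambda>k. SOME x. Mp k x)"
  have M: "Mp k (X k)" if "k \<in> I" for k
  proof -
    have mn: "mult_nvs add mult z u (V k) (vadd k) (vz k) (smult k)" using assms(4) that by blast
    have nv: "nvs add mult z u (V k) (vadd k) (vz k) (smult k)"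
      using mn unfolding mult_nvs_def by (rule conjunct1)
    have ex: "\<exists>(J :: 'v set) (\<sigma> :: 'v \<Rightarrow> 'a \<Rightarrow> 'a) (\<rho> :: 'v \<Rightarrow> 'a \<Rightarrow> 'a) (\<phi> :: 'v \<Rightarrow> 'v \<Rightarrow> 'a).
       (\<forall>i\<in>J. mult_aut mult u (\<sigma> i) \<and> mult_aut mult u (\<rho> i)) \<and>
       bij_betw \<phi> (V k) (fsupp z J) \<and>
       (\<forall>v\<in>V k. \<forall>w\<in>V k. \<phi> (vadd k v w) =
             (\<lambda>i. if i \<in> J then tau_add add (\<sigma> i) (\<phi> v i) (\<phi> w i) else z)) \<and>
       (\<forall>a. \<forall>v\<in>V k. \<phi> (smult k a v) =
             (\<lambda>i. if i \<in> J then mult (\<rho> i a) (\<phi> v i) else z))"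
      using mn unfolding mult_nvs_def by (rule conjunct2)
    from ex obtain J :: "'v set" and \<sigma> \<rho> :: "'v \<Rightarrow> 'a \<Rightarrow> 'a" and \<phi> :: "'v \<Rightarrow> 'v \<Rightarrow> 'a" where
       "(\<forall>i\<in>J. mult_aut mult u (\<sigma> i) \<and> mult_aut mult u (\<rho> i)) \<and>
       bij_betw \<phi> (V k) (fsupp z J) \<and>
       (\<forall>v\<in>V k. \<forall>w\<in>V k. \<phi> (vadd k v w) =
             (\<lambda>i. if i \<in> J then tau_add add (\<sigma> i) (\<phi> v i) (\<phi> w i) else z)) \<and>
       (\<forall>a. \<forall>v\<in>V k. \<phi> (smult k a v) =
             (\<lambda>i. if i \<in> J then mult (\<rho> i a) (\<phi> v i) else z))"
      by (elim exE)
    then have "Mp k (J, \<sigma>, \<rho>, \<phi>)" using assms(1) nv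
      unfolding Mp_def mnv_def mnv_axioms_def nf_def fst_conv snd_conv by (elim conjE) (intro conjI)
    then show ?thesis unfolding X_def by (rule someI[of "Mp k"])
  qed
  have NV: "nvs add mult z u (V k) (vadd k) (vz k) (smult k)" if "k \<in> I" for k
  proof -
    have mn: "mult_nvs add mult z u (V k) (vadd k) (vz k) (smult k)" using assms(4) that by blast
    then show ?thesis unfolding mult_nvs_def by (rule conjunct1)
  qed
  have AG: "ab_grp_on (V k) (vadd k) (vz k)" if "k \<in> I" for k
    using nvsD[OF NV[OF that]] by blast
  have g_vz: "vz k \<in> V k"
    and g_add: "\<And>x y. x \<in> V k \<Longrightarrow> y \<in> V k \<Longrightarrow> vadd k x y \<in> V k"
    and g_assoc: "\<And>x y w. x \<in> V k \<Longrightarrow> y \<in> V k \<Longrightarrow> w \<in> V k \<Longrightarrow> vadd k (vadd k x y) w = vadd k x (vadd k y w)"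
    and g_comm: "\<And>x y. x \<in> V k \<Longrightarrow> y \<in> V k \<Longrightarrow> vadd k x y = vadd k y x"
    and g_zl: "\<And>x. x \<in> V k \<Longrightarrow> vadd k (vz k) x = x"
    if "k \<in> I" for k
    using agD[OF AG[OF that]] by auto
  have s_in: "\<And>a x. x \<in> V k \<Longrightarrow> smult k a x \<in> V k"
    and s_dist: "\<And>a x y. x \<in> V k \<Longrightarrow> y \<in> V k \<Longrightarrow> smult k a (vadd k x y) = vadd k (smult k a x) (smult k a y)"
    and s_mult: "\<And>a b x. x \<in> V k \<Longrightarrow> smult k (mult a b) x = smult k a (smult k b x)"
    and s_z: "\<And>x. x \<in> V k \<Longrightarrow> smult k z x = vz k"
    and s_u: "\<And>x. x \<in> V k \<Longrightarrow> smult k u x = x"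
    and s_neg: "\<And>x. x \<in> V k \<Longrightarrow> vadd k x (smult k (nf_neg add z u) x) = vz k"
    and s_free: "\<And>a b x. x \<in> V k \<Longrightarrow> smult k a x = smult k b x \<Longrightarrow> a = b \<or> x = vz k"
    if "k \<in> I" for k
    using nvsD[OF NV[OF that]] by auto
  have pz_in: "pz \<in> P" unfolding pz_def P_def using g_vz by auto
  have pa_in: "pa f g \<in> P" if "f \<in> P" "g \<in> P" for f g
    using that g_add unfolding pa_def P_def by (auto simp: PiE_iff)
  have ps_in: "ps a f \<in> P" if "f \<in> P" for a f
    using that s_in unfolding ps_def P_def by (auto simp: PiE_iff)
  have AGP: "ab_grp_on P pa pz"
    unfolding ab_grp_on_def
  proof (intro conjI ballI)
    show "pz \<in> P" by (rule pz_in)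
    fix x y assume x: "x \<in> P" and y: "y \<in> P"
    show "pa x y \<in> P" using pa_in x y .
    show "pa x y = pa y x" using x y g_comm unfolding pa_def P_def by (auto simp: PiE_iff fun_eq_iff extensional_def)
    fix w assume w: "w \<in> P"
    show "pa (pa x y) w = pa x (pa y w)" using x y w g_assoc unfolding pa_def P_def
      by (auto simp: PiE_iff fun_eq_iff extensional_def)
  next
    fix x assume x: "x \<in> P"
    show "pa pz x = x" using x g_zl unfolding pa_def pz_def P_def by (auto simp: PiE_iff fun_eq_iff extensional_def)
    show "\<exists>y\<in>P. pa x y = pz"
      using x s_neg ps_in[OF x] unfolding pa_def pz_def ps_def P_def
      by (intro bexI[of _ "ps (nf_neg add z u) x"]) (auto simp: PiE_iff fun_eq_iff ps_def)
  qed
  define Jk where "Jk = (\<lambda>k. fst (X k))"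
  define sk where "sk = (\<lambda>k. fst (snd (X k)))"
  define rk where "rk = (\<lambda>k. fst (snd (snd (X k))))"
  define pk where "pk = (\<lambda>k. snd (snd (snd (X k))))"
  have Mk: "mnv add mult z u (V k) (vadd k) (vz k) (smult k) (Jk k) (sk k) (rk k) (pk k)"
    if "k \<in> I" for k
    using M[OF that] unfolding Mp_def Jk_def sk_def rk_def pk_def .
  have H2: "\<forall>a. \<forall>v\<in>P. ps a v \<in> P" using ps_in by blast
  have H3: "\<forall>a. \<forall>v\<in>P. \<forall>w\<in>P. ps a (pa v w) = pa (ps a v) (ps a w)"
    using s_dist unfolding P_def pa_def ps_def by (auto simp: PiE_iff fun_eq_iff extensional_def)
  have H4: "\<forall>a b. \<forall>v\<in>P. ps (mult a b) v = ps a (ps b v)"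
    using s_mult unfolding P_def ps_def by (auto simp: PiE_iff fun_eq_iff extensional_def)
  have H5: "\<forall>v\<in>P. ps z v = pz"
    using s_z unfolding P_def ps_def pz_def by (auto simp: PiE_iff fun_eq_iff extensional_def)
  have H6: "\<forall>v\<in>P. ps u v = v"
    using s_u unfolding P_def ps_def by (auto simp: PiE_iff fun_eq_iff extensional_def)
  have H7: "\<forall>v\<in>P. pa v (ps (nf_neg add z u) v) = pz"
    using s_neg unfolding P_def ps_def pa_def pz_def by (auto simp: PiE_iff fun_eq_iff extensional_def)
  have H8: "\<forall>a b. \<forall>v\<in>P. ps a v = ps b v \<longrightarrow> a = b \<or> v = pz"
  proof (intro allI ballI impI)
    fix a b v assume v: "v \<in> P" and eq: "ps a v = ps b v"
    show "a = b \<or> v = pz"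
    proof (cases "\<forall>k\<in>I. v k = vz k")
      case True
      then have "v = pz" using v unfolding P_def pz_def by (auto simp: PiE_iff fun_eq_iff extensional_def)
      then show ?thesis by blast
    next
      case False
      then obtain k where k: "k \<in> I" "v k \<noteq> vz k" by blast
      have "ps a v k = ps b v k" using eq by simp
      then have "smult k a (v k) = smult k b (v k)" using k unfolding ps_def by simp
      moreover have "v k \<in> V k" using v k unfolding P_def by auto
      ultimately show ?thesis using s_free[OF k(1)] k by blast
    qed
  qed
  define Q where "Q = qker P pa ps"
  have QP: "Q \<subseteq> P" unfolding Q_def qker_def by blast
  have H9a: "agen P pa pz Q \<subseteq> P"
  proof
    fix x assume "x \<in> agen P pa pz Q"
    then show "x \<in> P"
      by (induction rule: agen.induct) (use pz_in QP pa_in in auto)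
  qed
  have H9b: "P \<subseteq> agen P pa pz Q"
  proof
    fix f assume f: "f \<in> P"
    have fk: "f k \<in> V k" if "k \<in> I" for k using f that unfolding P_def by auto
    define g where "g = (\<lambda>T. \<lambda>k\<in>I. proj add mult u z (V k) (Jk k) (sk k) (rk k) (pk k) T (f k))"
    have gin: "g T \<in> P" for T
      unfolding g_def P_def using mnv.proj_in[OF Mk fk] by (auto simp: PiE_iff)
    have gq: "g {p} \<in> Q" for p
    proof -
      have "\<exists>c. pa (ps a (g {p})) (ps b (g {p})) = ps c (g {p})" for a b
      proof (intro exI[of _ "p a b"])
        show "pa (ps a (g {p})) (ps b (g {p})) = ps (p a b) (g {p})"
          unfolding pa_def ps_def g_def using mnv.proj_q[OF Mk fk] by (auto simp: fun_eq_iff)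
      qed
      then show ?thesis unfolding Q_def qker_def using gin by blast
    qed
    have "T \<subseteq> S \<Longrightarrow> g T \<in> agen P pa pz Q" if "finite T" for T
      using that
    proof (induction T rule: finite_induct)
      case empty
      have "g {} = pz"
      proof
        fix k show "g {} k = pz k"
          by (cases "k \<in> I") (simp_all add: g_def pz_def mnv.proj_empty[OF Mk fk])
      qed
      then show ?case by (simp add: agen.agen_zero)
    next
      case (insert p T)
      have "g (insert p T) = pa (g T) (g {p})"
      proof
        fix k show "g (insert p T) k = pa (g T) (g {p}) k"
          by (cases "k \<in> I") (simp_all add: g_def pa_def mnv.proj_insert[OF Mk fk insert.hyps(2)])
      qed
      moreover have "g T \<in> agen P pa pz Q" using insert.IH insert.prems by blast
      moreover have "g {p} \<in> agen P pa pz Q" using gq by (rule agen.agen_gen)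
      ultimately show ?case by (simp add: agen.agen_add)
    qed
    then have "g S \<in> agen P pa pz Q" using Sfin by blast
    moreover have "g S = f"
    proof
      fix k show "g S k = f k"
      proof (cases "k \<in> I")
        case True
        have "\<forall>i\<in>Jk k. \<forall>\<alpha>. \<alpha> \<noteq> z \<longrightarrow> cls add mult u (sk k i) (rk k i) \<alpha> \<in> S"
          using mnv.auts[OF Mk[OF True]] cls_in unfolding S_def by blast
        then show ?thesis unfolding g_def using mnv.proj_all[OF Mk[OF True] fk[OF True]] True by simp
      next
        case False
        then show ?thesis using f unfolding g_def P_def by (auto simp: PiE_iff extensional_def)
      qed
    qed
    ultimately show "f \<in> agen P pa pz Q" by simp
  qed
  have H9: "P = agen P pa pz (qker P pa ps)" using equalityI[OF H9b H9a] unfolding Q_def .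
  have "nvs add mult z u P pa pz ps"
    unfolding nvs_def by (intro conjI AGP H2 H3 H4 H5 H6 H7 H8 H9)
  then show ?thesis unfolding P_def pa_def pz_def ps_def .
qed
end
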